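(* Let $(X,\tau)$ be a $T_1$ topological space. Suppose that for every continuous map $f:(X,\tau)\to(\mathcal P(X),\tau_{\mathcal S(X)})$ with $x\in f(x)$ for all $x\in X$, there exist a continuous neighborhood refinement map $f_*$ of $f$ and a set $D\subseteq X$ such that the map $g:(X,\tau)\to(\mathcal P(D),\tau_{\mathcal S(D)})$, $g(x)=f_*(x)\cap D$, satisfies (1) $g^{-1}(\{\emptyset\})=\emptyset$, and (2) $\left|\bigcup_{y\in N^*(x)}g(y)\right|<\omega_0$ for all $x\in X$, where $N^*:X\to\tau$ is given by $N^*(a)=f_*^{-1}(\mathcal U_X(a))=\{x\in X: a\in f_*(x)\}$. Then $X$ is a paracompact D-space.
   Context: For a set $A$ and $a\in A$, $\mathcal U_A(a)=\{B\subseteq A: a\in B\}$; the principal ultrafilter topology $\tau_{\mathcal S(A)}$ on $\mathcal P(A)$ is generated by the subbase $\{\mathcal U_A(a): a\in A\}$. A continuous neighborhood refinement map of $f$ is a continuous map $f_*:(X,\tau)\to(\mathcal P(X),\tau_{\mathcal S(X)})$ with $x\in f_*(x)\subseteq f(x)$ for all $x$. Paracompact means every open cover has a locally finite open refinement (no Hausdorff assumption). An open neighborhood assignment is $N:X\to\tau$ with $x\in N(x)$; $X$ is a D-space if every open neighborhood assignment $N$ admits a closed discrete $D\subseteq X$ with $\bigcup_{d\in D}N(d)=X$. *)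

theory Defs
  imports "HOL-Analysis.Analysis"
begin

definition U_ult :: "'a set \<Rightarrow> 'a \<Rightarrow> 'a set set" where
  "U_ult A a = {B. B \<subseteq> A \<and> a \<in> B}"

text \<open>Principal ultrafilter topology on Pow A, generated by the subbase
  {U_A(a) | a in A}; the whole space Pow A is included as the empty intersection.\<close>
definition pu_top :: "'a set \<Rightarrow> 'a set topology" where
  "pu_top A = topology_generated_by (insert (Pow A) {U_ult A a | a. a \<in> A})"

definition cont_nbhd_refinement ::
    "'a topology \<Rightarrow> ('a \<Rightarrow> 'a set) \<Rightarrow> ('a \<Rightarrow> 'a set) \<Rightarrow> bool" where
  "cont_nbhd_refinement T f fs \<longleftrightarrow>
     continuous_map T (pu_top (topspace T)) fs \<and>
     (\<forall>x\<in>topspace T. x \<in> fs x \<and> fs x \<subseteq> f x)"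

definition locally_finite_in :: "'a topology \<Rightarrow> 'a set set \<Rightarrow> bool" where
  "locally_finite_in T \<V> \<longleftrightarrow>
     (\<forall>x\<in>topspace T. \<exists>W. openin T W \<and> x \<in> W \<and> finite {V\<in>\<V>. V \<inter> W \<noteq> {}})"

definition paracompact_space :: "'a topology \<Rightarrow> bool" where
  "paracompact_space T \<longleftrightarrow>
     (\<forall>\<U>. (\<forall>U\<in>\<U>. openin T U) \<and> \<Union>\<U> = topspace T \<longrightarrow>
        (\<exists>\<V>. (\<forall>V\<in>\<V>. openin T V) \<and> \<Union>\<V> = topspace T \<and>
              (\<forall>V\<in>\<V>. \<exists>U\<in>\<U>. V \<subseteq> U) \<and> locally_finite_in T \<V>))"

definition closed_discrete_in :: "'a topology \<Rightarrow> 'a set \<Rightarrow> bool" where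
  "closed_discrete_in T D \<longleftrightarrow> D \<subseteq> topspace T \<and> closedin T D \<and>
     (\<forall>x\<in>D. \<exists>W. openin T W \<and> W \<inter> D = {x})"

definition D_space :: "'a topology \<Rightarrow> bool" where
  "D_space T \<longleftrightarrow>
     (\<forall>N. (\<forall>x\<in>topspace T. openin T (N x) \<and> x \<in> N x) \<longrightarrow>
        (\<exists>D. closed_discrete_in T D \<and> (\<Union>d\<in>D. N d) = topspace T))"

end

theory Submission
  imports Defs
begin

lemma pu_cont_iff:
  "continuous_map T (pu_top (topspace T)) g \<longleftrightarrow>
     (\<forall>x\<in>topspace T. g x \<subseteq> topspace T) \<and>
     (\<forall>a\<in>topspace T. openin T {x\<in>topspace T. a \<in> g x})"
proof -
  let ?X = "topspace T"
  let ?S = "insert (Pow ?X) {U_ult ?X a | a. a \<in> ?X}"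
  have U: "\<Union>?S = Pow ?X" by (auto simp: U_ult_def)
  have pre: "g -` U_ult ?X a \<inter> ?X = {x\<in>?X. a \<in> g x}"
    if "\<forall>x\<in>?X. g x \<subseteq> ?X" for a using that by (auto simp: U_ult_def)
  have preP: "g -` Pow ?X \<inter> ?X = ?X" if "\<forall>x\<in>?X. g x \<subseteq> ?X" using that by auto
  show ?thesis
    unfolding pu_top_def continuous_on_generated_topo_iff U
  proof (intro iffI conjI ballI allI impI; (elim conjE)?)
    fix x assume "g ` ?X \<subseteq> Pow ?X" "x \<in> ?X"
    then show "g x \<subseteq> ?X" by blast
  next
    fix a assume A: "\<forall>U. U \<in> ?S \<longrightarrow> openin T (g -` U \<inter> ?X)" "g ` ?X \<subseteq> Pow ?X" "a \<in> ?X"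
    then have o: "openin T (g -` U_ult ?X a \<inter> ?X)" by blast
    have "\<forall>x\<in>?X. g x \<subseteq> ?X" using A(2) by auto
    then show "openin T {x\<in>?X. a \<in> g x}" using pre[of a] o by simp
  next
    fix U assume A: "\<forall>x\<in>?X. g x \<subseteq> ?X" "\<forall>a\<in>?X. openin T {x\<in>?X. a \<in> g x}" "U \<in> ?S"
    from A(3) show "openin T (g -` U \<inter> ?X)"
    proof (elim insertE)
      assume "U = Pow ?X" then show ?thesis using preP[OF A(1)] by simp
    next
      assume "U \<in> {U_ult ?X a | a. a \<in> ?X}"
      then obtain a where "a \<in> ?X" "U = U_ult ?X a" by blast
      then show ?thesis using pre[OF A(1), of a] A(2) by simp
    qed
  next
    assume "\<forall>x\<in>?X. g x \<subseteq> ?X"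
    then show "g ` ?X \<subseteq> Pow ?X" by auto
  qed
qed

theorem mainTheorem7:
  fixes T :: "'a topology"
  assumes "t1_space T"
    and "\<forall>f. continuous_map T (pu_top (topspace T)) f \<and> (\<forall>x\<in>topspace T. x \<in> f x) \<longrightarrow>
           (\<exists>fs D. cont_nbhd_refinement T f fs \<and> D \<subseteq> topspace T \<and>
              (\<forall>x\<in>topspace T. fs x \<inter> D \<noteq> {}) \<and>
              (\<forall>x\<in>topspace T.
                 finite (\<Union>y\<in>{z\<in>topspace T. x \<in> fs z}. fs y \<inter> D)))"
  shows "paracompact_space T \<and> D_space T"
proof
  let ?X = "topspace T"
  show "paracompact_space T"
    unfolding paracompact_space_def
  proof safe
    fix \<U> assume op: "\<forall>U\<in>\<U>. openin T U" and cov: "\<Union>\<U> = ?X"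
    have "\<forall>a\<in>?X. \<exists>U\<in>\<U>. a \<in> U" using cov by auto
    then obtain C where C: "\<And>a. a \<in> ?X \<Longrightarrow> C a \<in> \<U> \<and> a \<in> C a" by metis
    define f where "f x = {a\<in>?X. x \<in> C a}" for x
    have sub: "{x\<in>?X. a \<in> f x} = C a" if "a \<in> ?X" for a
    proof -
      have "C a \<subseteq> ?X" using C[OF that] op openin_subset by blast
      then show ?thesis using that unfolding f_def by blast
    qed
    have cf: "continuous_map T (pu_top ?X) f"
    proof (subst pu_cont_iff, intro conjI ballI)
      show "f x \<subseteq> ?X" for x by (auto simp: f_def)
      fix a assume "a \<in> ?X" then show "openin T {x\<in>?X. a \<in> f x}" using sub C op by simp
    qed
    have xf: "\<forall>x\<in>?X. x \<in> f x" unfolding f_def using C by blast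
    from assms(2)[rule_format, OF conjI[OF cf xf]] obtain fs D where R: "cont_nbhd_refinement T f fs" "D \<subseteq> ?X"
      "\<forall>x\<in>?X. fs x \<inter> D \<noteq> {}"
      "\<forall>x\<in>?X. finite (\<Union>y\<in>{z\<in>?X. x \<in> fs z}. fs y \<inter> D)"
      by blast
    define N where "N d = {x\<in>?X. d \<in> fs x}" for d
    have fsc: "\<forall>x\<in>?X. fs x \<subseteq> ?X" "\<forall>a\<in>?X. openin T (N a)"
    proof -
      have "continuous_map T (pu_top ?X) fs" using R(1) unfolding cont_nbhd_refinement_def by blast
      then have "(\<forall>x\<in>?X. fs x \<subseteq> ?X) \<and> (\<forall>a\<in>?X. openin T {x\<in>?X. a \<in> fs x})"
        by (simp only: pu_cont_iff)
      then show "\<forall>x\<in>?X. fs x \<subseteq> ?X" "\<forall>a\<in>?X. openin T (N a)" unfolding N_def by blast+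
    qed
    have fsin: "\<forall>x\<in>?X. x \<in> fs x \<and> fs x \<subseteq> f x" using R(1) unfolding cont_nbhd_refinement_def by auto
    show "\<exists>\<V>. (\<forall>V\<in>\<V>. openin T V) \<and> \<Union>\<V> = ?X \<and> (\<forall>V\<in>\<V>. \<exists>U\<in>\<U>. V \<subseteq> U) \<and> locally_finite_in T \<V>"
    proof (intro exI[of _ "N ` D"] conjI)
      show "\<forall>V\<in>N ` D. openin T V" using fsc R(2) by auto
      show "\<Union>(N ` D) = ?X"
      proof
        show "\<Union>(N ` D) \<subseteq> ?X" unfolding N_def by blast
        show "?X \<subseteq> \<Union>(N ` D)"
        proof
          fix x assume x: "x \<in> ?X"
          then obtain d where "d \<in> fs x" "d \<in> D" using R(3) by blast
          then show "x \<in> \<Union>(N ` D)" using x unfolding N_def by blast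
        qed
      qed
      show "\<forall>V\<in>N ` D. \<exists>U\<in>\<U>. V \<subseteq> U"
      proof
        fix V assume "V \<in> N ` D"
        then obtain d where d: "d \<in> D" "V = N d" by auto
        have "V \<subseteq> C d"
        proof
          fix y assume "y \<in> V"
          then have "y \<in> ?X" "d \<in> fs y" using d unfolding N_def by auto
          then have "d \<in> f y" using fsin by blast
          then show "y \<in> C d" unfolding f_def by blast
        qed
        then show "\<exists>U\<in>\<U>. V \<subseteq> U" using C d R(2) by blast
      qed
      show "locally_finite_in T (N ` D)"
        unfolding locally_finite_in_def
      proof
        fix x assume x: "x \<in> ?X"
        have "{V \<in> N ` D. V \<inter> N x \<noteq> {}} \<subseteq> N ` (\<Union>y\<in>{z\<in>?X. x \<in> fs z}. fs y \<inter> D)"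
        proof
          fix V assume "V \<in> {V \<in> N ` D. V \<inter> N x \<noteq> {}}"
          then obtain d y where d: "d \<in> D" "V = N d" "y \<in> N d" "y \<in> N x" by blast
          then have "y \<in> {z\<in>?X. x \<in> fs z}" "d \<in> fs y \<inter> D" unfolding N_def by auto
          then show "V \<in> N ` (\<Union>y\<in>{z\<in>?X. x \<in> fs z}. fs y \<inter> D)" using d(2) by blast
        qed
        moreover have "finite (N ` (\<Union>y\<in>{z\<in>?X. x \<in> fs z}. fs y \<inter> D))"
          using R(4) x by blast
        ultimately have "finite {V \<in> N ` D. V \<inter> N x \<noteq> {}}"
          by (rule finite_subset)
        moreover have "x \<in> N x" using fsin x by (auto simp: N_def)
        ultimately show "\<exists>W. openin T W \<and> x \<in> W \<and> finite {V \<in> N ` D. V \<inter> W \<noteq> {}}"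
          using fsc x by blast
      qed
    qed
  qed
  show "D_space T"
    unfolding D_space_def
  proof safe
    fix M assume M: "\<forall>x\<in>?X. openin T (M x) \<and> x \<in> M x"
    define f where "f x = {a\<in>?X. x \<in> M a}" for x
    have sub: "{x\<in>?X. a \<in> f x} = M a" if "a \<in> ?X" for a
    proof -
      have "M a \<subseteq> ?X" using M that openin_subset by blast
      then show ?thesis using that unfolding f_def by blast
    qed
    have cf: "continuous_map T (pu_top ?X) f"
    proof (subst pu_cont_iff, intro conjI ballI)
      show "f x \<subseteq> ?X" for x by (auto simp: f_def)
      fix a assume "a \<in> ?X" then show "openin T {x\<in>?X. a \<in> f x}" using sub M by simp
    qed
    have xf: "\<forall>x\<in>?X. x \<in> f x" unfolding f_def using M by blast
    from assms(2)[rule_format, OF conjI[OF cf xf]] obtain fs D where R: "cont_nbhd_refinement T f fs" "D \<subseteq> ?X"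
      "\<forall>x\<in>?X. fs x \<inter> D \<noteq> {}"
      "\<forall>x\<in>?X. finite (\<Union>y\<in>{z\<in>?X. x \<in> fs z}. fs y \<inter> D)"
      by blast
    define N where "N d = {x\<in>?X. d \<in> fs x}" for d
    have fsc: "\<forall>x\<in>?X. fs x \<subseteq> ?X" "\<forall>a\<in>?X. openin T (N a)"
    proof -
      have "continuous_map T (pu_top ?X) fs" using R(1) unfolding cont_nbhd_refinement_def by blast
      then have "(\<forall>x\<in>?X. fs x \<subseteq> ?X) \<and> (\<forall>a\<in>?X. openin T {x\<in>?X. a \<in> fs x})"
        by (simp only: pu_cont_iff)
      then show "\<forall>x\<in>?X. fs x \<subseteq> ?X" "\<forall>a\<in>?X. openin T (N a)" unfolding N_def by blast+
    qed
    have fsin: "\<forall>x\<in>?X. x \<in> fs x \<and> fs x \<subseteq> f x" using R(1) unfolding cont_nbhd_refinement_def by auto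
    have loc: "finite (N x \<inter> D)" "x \<in> N x" "openin T (N x)" if x: "x \<in> ?X" for x
    proof -
      have "N x \<inter> D \<subseteq> (\<Union>y\<in>{z\<in>?X. x \<in> fs z}. fs y \<inter> D)"
        using fsin R(2) by (auto simp: N_def)
      then show "finite (N x \<inter> D)" using R(4) x finite_subset by blast
      show "x \<in> N x" using fsin x by (auto simp: N_def)
      show "openin T (N x)" using fsc x by auto
    qed
    have key: "\<exists>W. openin T W \<and> x \<in> W \<and> W \<inter> D \<subseteq> {x}" if x: "x \<in> ?X" for x
    proof -
      let ?F = "N x \<inter> D - {x}"
      have "closedin T ?F" using assms(1) loc(1)[OF x] R(2)
        unfolding t1_space_closedin_finite by auto
      then have "openin T (N x - ?F)" using loc(3)[OF x] by auto
      moreover have "x \<in> N x - ?F" using loc(2)[OF x] by auto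
      moreover have "(N x - ?F) \<inter> D \<subseteq> {x}" by auto
      ultimately show ?thesis by blast
    qed
    show "\<exists>D. closed_discrete_in T D \<and> (\<Union>d\<in>D. M d) = ?X"
    proof (intro exI[of _ D] conjI)
      show "(\<Union>d\<in>D. M d) = ?X"
      proof
        show "(\<Union>d\<in>D. M d) \<subseteq> ?X" using M R(2) openin_subset by blast
        show "?X \<subseteq> (\<Union>d\<in>D. M d)"
        proof
          fix x assume x: "x \<in> ?X"
          then obtain d where "d \<in> fs x" "d \<in> D" using R(3) by blast
          then have "x \<in> M d" using fsin x by (auto simp: f_def)
          then show "x \<in> (\<Union>d\<in>D. M d)" using \<open>d \<in> D\<close> by blast
        qed
      qed
      show "closed_discrete_in T D"
        unfolding closed_discrete_in_def
      proof (intro conjI ballI)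
        show "D \<subseteq> ?X" by (rule R(2))
        show "closedin T D"
          unfolding closedin_def
        proof
          show "openin T (?X - D)"
            unfolding openin_subopen[of T "?X - D"]
          proof
            fix x assume "x \<in> ?X - D"
            then obtain W where "openin T W" "x \<in> W" "W \<inter> D \<subseteq> {x}" using key by blast
            then show "\<exists>W. openin T W \<and> x \<in> W \<and> W \<subseteq> ?X - D"
              using \<open>x \<in> ?X - D\<close> openin_subset by fastforce
          qed
        qed (rule R(2))
        fix x assume "x \<in> D"
        then obtain W where "openin T W" "x \<in> W" "W \<inter> D \<subseteq> {x}" using key R(2) by blast
        then show "\<exists>W. openin T W \<and> W \<inter> D = {x}" using \<open>x \<in> D\<close> by blast
      qed
    qed
  qed
qed

end
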